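(* The Banach algebra $M_{\mathbb{N}}(\mathbb{C})$ is symmetrically pseudo-amenable.
   Context: $M_{\mathbb{N}}(\mathbb{C})$ denotes the set of $\mathbb{N}\times\mathbb{N}$ complex matrices $(a_{ij})$ with $\|(a_{ij})\|=\sum_{i,j\in\mathbb{N}}|a_{ij}|<\infty$, a Banach algebra under this norm and the usual matrix multiplication. For a Banach algebra $\mathfrak{U}$, $\mathfrak{U}\widehat{\otimes}\mathfrak{U}$ is the projective tensor product, with $a(b\otimes c)=ab\otimes c$, $(b\otimes c)a=b\otimes ca$, and $\pi(b\otimes c)=bc$ (extended linearly and continuously). The flip is $(b\otimes c)^{\circ}=c\otimes b$; $\mathbf{t}$ is symmetric if $\mathbf{t}^\circ=\mathbf{t}$. An approximate diagonal is a net $\{\mathbf{t}_\lambda\}$ in $\mathfrak{U}\widehat{\otimes}\mathfrak{U}$ (not necessarily bounded) with $a\mathbf{t}_\lambda-\mathbf{t}_\lambda a\to0$ and $\pi(\mathbf{t}_\lambda)a\to a$ for all $a\in\mathfrak{U}$. $\mathfrak{U}$ is symmetrically pseudo-amenable if it has an approximate diagonal consisting of symmetric elements. *)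

theory Defs
  imports "HOL-Analysis.Analysis"
begin

text \<open>The Banach algebra M_N(C): N x N complex matrices with absolutely summable entries,
  represented as functions on nat x nat, carrier l1mat.\<close>

type_synonym mat = "nat \<times> nat \<Rightarrow> complex"

definition l1mat :: "mat set" where
  "l1mat = {a. (\<lambda>p. norm (a p)) summable_on UNIV}"

definition mnorm :: "mat \<Rightarrow> real" where
  "mnorm a = (\<Sum>\<^sub>\<infinity>p. norm (a p))"

definition mmult :: "mat \<Rightarrow> mat \<Rightarrow> mat" where
  "mmult a b = (\<lambda>(i, j). \<Sum>\<^sub>\<infinity>k. a (i, k) * b (k, j))"

definition bbil :: "(mat \<Rightarrow> mat \<Rightarrow> complex) \<Rightarrow> bool" where
  "bbil \<phi> \<longleftrightarrow>
     (\<forall>a\<in>l1mat. \<forall>b\<in>l1mat. \<forall>c\<in>l1mat. \<forall>z::complex.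
        \<phi> (\<lambda>p. a p + z * b p) c = \<phi> a c + z * \<phi> b c \<and>
        \<phi> c (\<lambda>p. a p + z * b p) = \<phi> c a + z * \<phi> c b) \<and>
     (\<exists>K. \<forall>a\<in>l1mat. \<forall>b\<in>l1mat. norm (\<phi> a b) \<le> K * mnorm a * mnorm b)"

text \<open>Projective tensor product M_N(C) hat-tensor M_N(C).  Every element is of the form
  sum_n b_n (x) c_n with sum_n |b_n| |c_n| < infinity; we represent elements by such sequences.
  Two representations denote the same tensor iff every bounded bilinear form (the dual of the
  projective tensor product) takes the same value on them.\<close>

type_synonym tens = "nat \<Rightarrow> mat \<times> mat"

definition trep :: "tens \<Rightarrow> bool" where
  "trep t \<longleftrightarrow> (\<forall>n. fst (t n) \<in> l1mat \<and> snd (t n) \<in> l1mat) \<and>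
               summable (\<lambda>n. mnorm (fst (t n)) * mnorm (snd (t n)))"

definition tpair :: "(mat \<Rightarrow> mat \<Rightarrow> complex) \<Rightarrow> tens \<Rightarrow> complex" where
  "tpair \<phi> t = (\<Sum>n. \<phi> (fst (t n)) (snd (t n)))"

definition teq :: "tens \<Rightarrow> tens \<Rightarrow> bool" where
  "teq t s \<longleftrightarrow> (\<forall>\<phi>. bbil \<phi> \<longrightarrow> tpair \<phi> t = tpair \<phi> s)"

definition pnorm :: "tens \<Rightarrow> real" where
  "pnorm t = Inf {(\<Sum>n. mnorm (fst (s n)) * mnorm (snd (s n))) | s. trep s \<and> teq s t}"

definition lmod :: "mat \<Rightarrow> tens \<Rightarrow> tens" where
  "lmod a t = (\<lambda>n. (mmult a (fst (t n)), snd (t n)))"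

definition rmod :: "tens \<Rightarrow> mat \<Rightarrow> tens" where
  "rmod t a = (\<lambda>n. (fst (t n), mmult (snd (t n)) a))"

definition tflip :: "tens \<Rightarrow> tens" where
  "tflip t = (\<lambda>n. (snd (t n), fst (t n)))"

definition tdiff :: "tens \<Rightarrow> tens \<Rightarrow> tens" where
  "tdiff t s = (\<lambda>n. if even n then t (n div 2)
                    else ((\<lambda>p. - fst (s (n div 2)) p), snd (s (n div 2))))"

definition tpi :: "tens \<Rightarrow> mat" where
  "tpi t = (\<lambda>p. \<Sum>n. mmult (fst (t n)) (snd (t n)) p)"

end

theory Submission
  imports Defs
begin

definition Em :: "nat \<Rightarrow> nat \<Rightarrow> mat" where
  "Em i j = (\<lambda>(p,q). if p = i \<and> q = j then 1 else 0)"

lemma mnorm_nonneg: "mnorm x \<ge> 0"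
  unfolding mnorm_def by (rule infsum_nonneg) simp

lemma l1_norm_le:
  assumes "x \<in> l1mat" "\<And>p. norm (y p) \<le> norm (x p)"
  shows "y \<in> l1mat" "mnorm y \<le> mnorm x"
proof -
  have s: "(\<lambda>p. norm (x p)) summable_on UNIV" using assms(1) unfolding l1mat_def by simp
  have t: "(\<lambda>p. norm (y p)) summable_on UNIV"
    by (rule summable_on_comparison_test[OF s]) (use assms in auto)
  then show "y \<in> l1mat" unfolding l1mat_def by simp
  show "mnorm y \<le> mnorm x" unfolding mnorm_def by (rule infsum_mono[OF t s]) (use assms in auto)
qed

lemma l1_zero[simp]: "(\<lambda>_. 0) \<in> l1mat"
  unfolding l1mat_def by simp

lemma mnorm_zero[simp]: "mnorm (\<lambda>_. 0) = 0"
  unfolding mnorm_def by simp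

lemma l1_scale:
  assumes "x \<in> l1mat"
  shows "(\<lambda>p. c * x p) \<in> l1mat" "mnorm (\<lambda>p. c * x p) = norm c * mnorm x"
proof -
  have s: "(\<lambda>p. norm (x p)) summable_on UNIV" using assms(1) unfolding l1mat_def by simp
  have "(\<lambda>p. norm c * norm (x p)) summable_on UNIV" using summable_on_cmult_right[OF s] .
  then show "(\<lambda>p. c * x p) \<in> l1mat" unfolding l1mat_def by (simp add: norm_mult)
  show "mnorm (\<lambda>p. c * x p) = norm c * mnorm x" unfolding mnorm_def norm_mult
    by (rule infsum_cmult_right) (use s in auto)
qed

lemma l1_add:
  assumes "x \<in> l1mat" "y \<in> l1mat"
  shows "(\<lambda>p. x p + y p) \<in> l1mat"
proof -
  have s: "(\<lambda>p. norm (x p) + norm (y p)) summable_on UNIV"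
    using assms unfolding l1mat_def by (intro summable_on_add) auto
  have "(\<lambda>p. norm (x p + y p)) summable_on UNIV"
    by (rule summable_on_comparison_test[OF s]) (auto intro: norm_triangle_ineq)
  then show ?thesis unfolding l1mat_def by simp
qed

lemma l1_neg:
  assumes "x \<in> l1mat"
  shows "(\<lambda>p. - x p) \<in> l1mat" "mnorm (\<lambda>p. - x p) = mnorm x"
  using assms unfolding l1mat_def mnorm_def by auto

lemma l1_bij:
  assumes "bij h" "x \<in> l1mat"
  shows "(\<lambda>p. x (h p)) \<in> l1mat" "mnorm (\<lambda>p. x (h p)) = mnorm x"
  using assms summable_on_reindex_bij_betw[of h UNIV UNIV "\<lambda>p. norm (x p)"]
    infsum_reindex_bij_betw[of h UNIV UNIV "\<lambda>p. norm (x p)"]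
  unfolding l1mat_def mnorm_def by auto

lemma l1_sum:
  assumes "finite I" "\<And>i. i \<in> I \<Longrightarrow> m i \<in> l1mat"
  shows "(\<lambda>p. \<Sum>i\<in>I. z i * m i p) \<in> l1mat"
  using assms
proof (induction I rule: finite_induct)
  case empty then show ?case by simp
next
  case (insert k I)
  have "(\<lambda>p. z k * m k p + (\<Sum>i\<in>I. z i * m i p)) \<in> l1mat"
    using insert by (intro l1_add l1_scale) auto
  then show ?case using insert by simp
qed

lemma Em_l1: "Em i j \<in> l1mat" "mnorm (Em i j) = 1"
proof -
  have "(\<lambda>p. norm (Em i j p)) summable_on {(i,j)}" by simp
  moreover have "(\<lambda>p. norm (Em i j p)) summable_on {(i,j)} \<longleftrightarrow> (\<lambda>p. norm (Em i j p)) summable_on UNIV"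
    by (rule summable_on_cong_neutral) (auto simp: Em_def split: if_splits)
  ultimately show "Em i j \<in> l1mat" unfolding l1mat_def by simp
  have "mnorm (Em i j) = infsum (\<lambda>p. norm (Em i j p)) {(i,j)}"
    unfolding mnorm_def by (rule infsum_cong_neutral) (auto simp: Em_def split: if_splits)
  then show "mnorm (Em i j) = 1" by (simp add: Em_def)
qed

lemma infsum_single_nat:
  "infsum (\<lambda>k::nat. if k = i then v else 0) UNIV = (v::complex)"
proof -
  have "infsum (\<lambda>k::nat. if k = i then v else 0) UNIV = infsum (\<lambda>k::nat. if k = i then v else 0) {i}"
    by (rule infsum_cong_neutral) auto
  then show ?thesis by simp
qed

lemma mmult_col:
  "mmult x (\<lambda>p. c * Em i j p) = (\<lambda>(p,q). if q = j then c * x (p,i) else 0)"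
proof -
  have "(\<Sum>\<^sub>\<infinity>k. x (p, k) * (c * Em i j (k, q))) = (if q = j then c * x (p,i) else 0)" for p q
  proof (cases "q = j")
    case True
    then have "(\<lambda>k. x (p, k) * (c * Em i j (k, q))) = (\<lambda>k. if k = i then c * x (p,i) else 0)"
      by (auto simp: Em_def)
    then show ?thesis using True infsum_single_nat by simp
  next
    case False
    then show ?thesis by (simp add: Em_def)
  qed
  then show ?thesis unfolding mmult_def by auto
qed

lemma mmult_row:
  "mmult (\<lambda>p. c * Em j i p) x = (\<lambda>(p,q). if p = j then c * x (i,q) else 0)"
proof -
  have "(\<Sum>\<^sub>\<infinity>k. c * Em j i (p, k) * x (k, q)) = (if p = j then c * x (i,q) else 0)" for p q
  proof (cases "p = j")
    case True
    then have "(\<lambda>k. c * Em j i (p, k) * x (k, q)) = (\<lambda>k. if k = i then c * x (i,q) else 0)"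
      by (auto simp: Em_def)
    then show ?thesis using True infsum_single_nat by simp
  next
    case False
    then show ?thesis by (simp add: Em_def)
  qed
  then show ?thesis unfolding mmult_def by auto
qed

lemma mmult_zero1[simp]: "mmult (\<lambda>_. 0) x = (\<lambda>_. 0)" unfolding mmult_def by auto
lemma mmult_zero2[simp]: "mmult x (\<lambda>_. 0) = (\<lambda>_. 0)" unfolding mmult_def by auto



lemma phi_lin1:
  assumes "bbil \<phi>" "a \<in> l1mat" "b \<in> l1mat" "c \<in> l1mat"
  shows "\<phi> (\<lambda>p. a p + z * b p) c = \<phi> a c + z * \<phi> b c"
  using assms unfolding bbil_def by blast

lemma phi_lin2:
  assumes "bbil \<phi>" "a \<in> l1mat" "b \<in> l1mat" "c \<in> l1mat"
  shows "\<phi> c (\<lambda>p. a p + z * b p) = \<phi> c a + z * \<phi> c b"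
  using assms unfolding bbil_def by blast

lemma phi_zero1:
  assumes "bbil \<phi>" "c \<in> l1mat" shows "\<phi> (\<lambda>_. 0) c = 0"
  using phi_lin1[OF assms(1) l1_zero l1_zero assms(2), of 1] by simp

lemma phi_zero2:
  assumes "bbil \<phi>" "c \<in> l1mat" shows "\<phi> c (\<lambda>_. 0) = 0"
  using phi_lin2[OF assms(1) l1_zero l1_zero assms(2), of 1] by simp

lemma phi_scale1:
  assumes "bbil \<phi>" "b \<in> l1mat" "c \<in> l1mat" shows "\<phi> (\<lambda>p. z * b p) c = z * \<phi> b c"
  using phi_lin1[OF assms(1) l1_zero assms(2,3), of z] phi_zero1[OF assms(1,3)] by simp

lemma phi_scale2:
  assumes "bbil \<phi>" "b \<in> l1mat" "c \<in> l1mat" shows "\<phi> c (\<lambda>p. z * b p) = z * \<phi> c b"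
  using phi_lin2[OF assms(1) l1_zero assms(2,3), of z] phi_zero2[OF assms(1,3)] by simp

lemma phi_add1:
  assumes "bbil \<phi>" "a \<in> l1mat" "b \<in> l1mat" "c \<in> l1mat"
  shows "\<phi> (\<lambda>p. a p + b p) c = \<phi> a c + \<phi> b c"
  using phi_lin1[OF assms, of 1] by simp

lemma phi_add2:
  assumes "bbil \<phi>" "a \<in> l1mat" "b \<in> l1mat" "c \<in> l1mat"
  shows "\<phi> c (\<lambda>p. a p + b p) = \<phi> c a + \<phi> c b"
  using phi_lin2[OF assms, of 1] by simp

lemma phi_neg1:
  assumes "bbil \<phi>" "b \<in> l1mat" "c \<in> l1mat" shows "\<phi> (\<lambda>p. - b p) c = - \<phi> b c"
  using phi_scale1[OF assms, of "-1"] by simp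

lemma phi_sum1:
  assumes "bbil \<phi>" "finite I" "\<And>i. i \<in> I \<Longrightarrow> m i \<in> l1mat" "c \<in> l1mat"
  shows "\<phi> (\<lambda>p. \<Sum>i\<in>I. z i * m i p) c = (\<Sum>i\<in>I. z i * \<phi> (m i) c)"
  using assms(2,3)
proof (induction I rule: finite_induct)
  case empty then show ?case using phi_zero1[OF assms(1,4)] by simp
next
  case (insert k I)
  have "\<phi> (\<lambda>p. (\<Sum>i\<in>I. z i * m i p) + z k * m k p) c = \<phi> (\<lambda>p. \<Sum>i\<in>I. z i * m i p) c + z k * \<phi> (m k) c"
    using insert.prems by (intro phi_lin1[OF assms(1)] l1_sum[OF insert.hyps(1)] assms(4)) auto
  then show ?case using insert by (simp add: add.commute)
qed

lemma phi_sum2: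
  assumes "bbil \<phi>" "finite I" "\<And>i. i \<in> I \<Longrightarrow> m i \<in> l1mat" "c \<in> l1mat"
  shows "\<phi> c (\<lambda>p. \<Sum>i\<in>I. z i * m i p) = (\<Sum>i\<in>I. z i * \<phi> c (m i))"
  using assms(2,3)
proof (induction I rule: finite_induct)
  case empty then show ?case using phi_zero2[OF assms(1,4)] by simp
next
  case (insert k I)
  have "\<phi> c (\<lambda>p. (\<Sum>i\<in>I. z i * m i p) + z k * m k p) = \<phi> c (\<lambda>p. \<Sum>i\<in>I. z i * m i p) + z k * \<phi> c (m k)"
    using insert.prems by (intro phi_lin2[OF assms(1)] l1_sum[OF insert.hyps(1)] assms(4)) auto
  then show ?case using insert by (simp add: add.commute)
qed

definition zt :: "mat \<times> mat" where "zt = ((\<lambda>_. 0), (\<lambda>_. 0))"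

definition finseq :: "nat \<Rightarrow> tens \<Rightarrow> bool" where
  "finseq M t \<longleftrightarrow> (\<forall>n. fst (t n) \<in> l1mat \<and> snd (t n) \<in> l1mat) \<and> (\<forall>n\<ge>M. t n = zt)"

lemma finseq_trep: "finseq M t \<Longrightarrow> trep t"
  unfolding trep_def finseq_def
proof (intro conjI summable_finite[of "{..<M}"])
  fix n assume "(\<forall>n. fst (t n) \<in> l1mat \<and> snd (t n) \<in> l1mat) \<and> (\<forall>n\<ge>M. t n = zt)" "n \<notin> {..<M}"
  then show "mnorm (fst (t n)) * mnorm (snd (t n)) = 0" by (auto simp: zt_def not_less)
qed auto

lemma finseq_tpair:
  assumes "bbil \<phi>" "finseq M t"
  shows "tpair \<phi> t = (\<Sum>n<M. \<phi> (fst (t n)) (snd (t n)))"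
  unfolding tpair_def
  by (rule suminf_finite) (use assms phi_zero1[OF assms(1) l1_zero] in \<open>auto simp: finseq_def zt_def not_less\<close>)

lemma finseq_norms:
  assumes "finseq M t"
  shows "(\<Sum>n. mnorm (fst (t n)) * mnorm (snd (t n))) = (\<Sum>n<M. mnorm (fst (t n)) * mnorm (snd (t n)))"
  by (rule suminf_finite) (use assms in \<open>auto simp: finseq_def zt_def not_less\<close>)

lemma sum_double: fixes f :: "nat \<Rightarrow> 'a::comm_monoid_add" shows "(\<Sum>n<2*M. f n) = (\<Sum>m<M. f (2*m) + f (2*m+1))"
  by (induction M) (auto simp: algebra_simps)

lemma tdiff_even: "tdiff X Y (2*m) = X m" unfolding tdiff_def by simp
lemma tdiff_odd: "tdiff X Y (2*m+1) = ((\<lambda>p. - fst (Y m) p), snd (Y m))" unfolding tdiff_def by simp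

lemma finseq_tdiff:
  assumes "finseq M X" "finseq M Y"
  shows "finseq (2*M) (tdiff X Y)"
  using assms unfolding finseq_def tdiff_def zt_def
  by (auto intro: l1_neg)

lemma finseq_lmod:
  assumes "finseq M t" "\<And>n. mmult a (fst (t n)) \<in> l1mat"
  shows "finseq M (lmod a t)"
  using assms unfolding finseq_def lmod_def zt_def by auto

lemma finseq_rmod:
  assumes "finseq M t" "\<And>n. mmult (snd (t n)) a \<in> l1mat"
  shows "finseq M (rmod t a)"
  using assms unfolding finseq_def rmod_def zt_def by auto

lemma finseq_tflip:
  assumes "finseq M t" shows "finseq M (tflip t)"
  using assms unfolding finseq_def tflip_def zt_def by auto

lemma tpair_tdiff:
  assumes "bbil \<phi>" "finseq M X" "finseq M Y"
  shows "tpair \<phi> (tdiff X Y) = (\<Sum>m<M. \<phi> (fst (X m)) (snd (X m)) - \<phi> (fst (Y m)) (snd (Y m)))"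
proof -
  have "tpair \<phi> (tdiff X Y) = (\<Sum>n<2*M. \<phi> (fst (tdiff X Y n)) (snd (tdiff X Y n)))"
    by (rule finseq_tpair[OF assms(1) finseq_tdiff[OF assms(2,3)]])
  also have "\<dots> = (\<Sum>m<M. \<phi> (fst (X m)) (snd (X m)) - \<phi> (fst (Y m)) (snd (Y m)))"
    unfolding sum_double tdiff_even tdiff_odd
    using assms(3) by (intro sum.cong refl) (auto simp: finseq_def phi_neg1[OF assms(1)])
  finally show ?thesis .
qed

lemma norms_tdiff:
  assumes "finseq M X" "finseq M Y"
  shows "(\<Sum>n. mnorm (fst (tdiff X Y n)) * mnorm (snd (tdiff X Y n))) =
     (\<Sum>m<M. mnorm (fst (X m)) * mnorm (snd (X m)) + mnorm (fst (Y m)) * mnorm (snd (Y m)))"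
  unfolding finseq_norms[OF finseq_tdiff[OF assms]] sum_double tdiff_even tdiff_odd
  using assms(2) by (intro sum.cong refl) (auto simp: finseq_def l1_neg)

lemma pnorm_le:
  assumes "trep s" "teq s x"
  shows "pnorm x \<le> (\<Sum>n. mnorm (fst (s n)) * mnorm (snd (s n)))"
  unfolding pnorm_def
proof (rule cInf_lower)
  show "(\<Sum>n. mnorm (fst (s n)) * mnorm (snd (s n))) \<in> {\<Sum>n. mnorm (fst (s n)) * mnorm (snd (s n)) |s. trep s \<and> teq s x}"
    using assms by blast
  show "bdd_below {\<Sum>n. mnorm (fst (s n)) * mnorm (snd (s n)) |s. trep s \<and> teq s x}"
    by (rule bdd_belowI[of _ 0]) (auto intro!: suminf_nonneg simp: trep_def mnorm_nonneg)
qed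

lemma pnorm_nonneg:
  assumes "trep x"
  shows "pnorm x \<ge> 0"
  unfolding pnorm_def
proof (rule cInf_greatest)
  show "{\<Sum>n. mnorm (fst (s n)) * mnorm (snd (s n)) |s. trep s \<and> teq s x} \<noteq> {}"
    using assms by (auto simp: teq_def)
qed (auto intro!: suminf_nonneg simp: trep_def mnorm_nonneg)



definition colm :: "nat \<Rightarrow> mat \<Rightarrow> mat" where "colm i x = (\<lambda>(p,q). if q = i then x (p,q) else 0)"
definition rowm :: "nat \<Rightarrow> mat \<Rightarrow> mat" where "rowm i x = (\<lambda>(p,q). if p = i then x (p,q) else 0)"
definition sw :: "nat \<Rightarrow> nat \<Rightarrow> nat \<Rightarrow> nat" where "sw i j q = (if q = j then i else if q = i then j else q)"

lemma sw_inv[simp]: "sw i j (sw i j q) = q" unfolding sw_def by auto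

lemma bij_sw2: "bij (\<lambda>(p,q). (p, sw i j q))"
  by (rule bij_betw_byWitness[where f'="\<lambda>(p,q). (p, sw i j q)"]) auto
lemma bij_sw1: "bij (\<lambda>(p,q). (sw i j p, q))"
  by (rule bij_betw_byWitness[where f'="\<lambda>(p,q). (sw i j p, q)"]) auto

lemma colA_eq: "(\<lambda>(p,q). if q = j then c * x (p,i) else 0) = (\<lambda>pq. c * colm i x ((\<lambda>(p,q). (p, sw i j q)) pq))"
  by (auto simp: colm_def sw_def fun_eq_iff)
lemma rowB_eq: "(\<lambda>(p,q). if p = j then c * x (i,q) else 0) = (\<lambda>pq. c * rowm i x ((\<lambda>(p,q). (sw i j p, q)) pq))"
  by (auto simp: rowm_def sw_def fun_eq_iff)

lemma colm_l1: "x \<in> l1mat \<Longrightarrow> colm i x \<in> l1mat"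
  by (rule l1_norm_le(1)[of x]) (auto simp: colm_def)
lemma rowm_l1: "x \<in> l1mat \<Longrightarrow> rowm i x \<in> l1mat"
  by (rule l1_norm_le(1)[of x]) (auto simp: rowm_def)

lemma colA_l1:
  assumes "x \<in> l1mat"
  shows "(\<lambda>(p,q). if q = j then c * x (p,i) else 0) \<in> l1mat"
    "mnorm (\<lambda>(p,q). if q = j then c * x (p,i) else 0) = norm c * mnorm (colm i x)"
proof -
  have b: "bij (\<lambda>(p,q). (p, sw i j q))" by (rule bij_sw2)
  note h = l1_bij[OF b colm_l1[OF assms]]
  show "(\<lambda>(p,q). if q = j then c * x (p,i) else 0) \<in> l1mat"
    unfolding colA_eq by (rule l1_scale(1)[OF h(1)])
  show "mnorm (\<lambda>(p,q). if q = j then c * x (p,i) else 0) = norm c * mnorm (colm i x)"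
    unfolding colA_eq l1_scale(2)[OF h(1)] h(2) ..
qed

lemma rowB_l1:
  assumes "x \<in> l1mat"
  shows "(\<lambda>(p,q). if p = j then c * x (i,q) else 0) \<in> l1mat"
    "mnorm (\<lambda>(p,q). if p = j then c * x (i,q) else 0) = norm c * mnorm (rowm i x)"
proof -
  have b: "bij (\<lambda>(p,q). (sw i j p, q))" by (rule bij_sw1)
  note h = l1_bij[OF b rowm_l1[OF assms]]
  show "(\<lambda>(p,q). if p = j then c * x (i,q) else 0) \<in> l1mat"
    unfolding rowB_eq by (rule l1_scale(1)[OF h(1)])
  show "mnorm (\<lambda>(p,q). if p = j then c * x (i,q) else 0) = norm c * mnorm (rowm i x)"
    unfolding rowB_eq l1_scale(2)[OF h(1)] h(2) ..
qed

lemma infsum_fsum: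
  fixes f :: "'i \<Rightarrow> 'a \<Rightarrow> real"
  assumes "finite I" "\<And>i. i \<in> I \<Longrightarrow> f i summable_on A"
  shows "infsum (\<lambda>x. \<Sum>i\<in>I. f i x) A = (\<Sum>i\<in>I. infsum (f i) A)"
    "(\<lambda>x. \<Sum>i\<in>I. f i x) summable_on A"
  using assms
proof (induction I rule: finite_induct)
  case (insert k I)
  { case 1 then show ?case using insert by (simp add: infsum_add summable_on_add) }
  { case 2 then show ?case using insert by (simp add: summable_on_add) }
qed auto

lemma mask_sum_le:
  assumes "x \<in> l1mat" "finite I"
    and "\<And>i. m i x \<in> l1mat"
    and "\<And>pq. (\<Sum>i\<in>I. norm (m i x pq)) \<le> norm (x pq)"
  shows "(\<Sum>i\<in>I. mnorm (m i x)) \<le> mnorm x"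
proof -
  have s: "(\<lambda>p. norm (x p)) summable_on UNIV" using assms(1) unfolding l1mat_def by simp
  have si: "\<And>i. (\<lambda>p. norm (m i x p)) summable_on UNIV" using assms(3) unfolding l1mat_def by simp
  have "(\<Sum>i\<in>I. mnorm (m i x)) = infsum (\<lambda>pq. \<Sum>i\<in>I. norm (m i x pq)) UNIV"
    unfolding mnorm_def using infsum_fsum(1)[OF assms(2) si] by simp
  also have "\<dots> \<le> mnorm x" unfolding mnorm_def
    by (rule infsum_mono[OF infsum_fsum(2)[OF assms(2) si] s]) (use assms(4) in auto)
  finally show ?thesis .
qed

lemma col_sum_le:
  assumes "x \<in> l1mat" shows "(\<Sum>i<N. mnorm (colm i x)) \<le> mnorm x"
proof (rule mask_sum_le[OF assms, where m=colm])
  fix pq :: "nat \<times> nat"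
  obtain p q where pq: "pq = (p,q)" by fastforce
  have "(\<Sum>i<N. norm (colm i x (p,q))) = (\<Sum>i<N. if i = q then norm (x (p,q)) else 0)"
    by (intro sum.cong) (auto simp: colm_def)
  also have "\<dots> \<le> norm (x (p,q))" by (simp add: sum.delta')
  finally show "(\<Sum>i<N. norm (colm i x pq)) \<le> norm (x pq)" using pq by simp
qed (auto intro: colm_l1 assms)

lemma row_sum_le:
  assumes "x \<in> l1mat" shows "(\<Sum>i<N. mnorm (rowm i x)) \<le> mnorm x"
proof (rule mask_sum_le[OF assms, where m=rowm])
  fix pq :: "nat \<times> nat"
  obtain p q where pq: "pq = (p,q)" by fastforce
  have "(\<Sum>i<N. norm (rowm i x (p,q))) = (\<Sum>i<N. if i = p then norm (x (p,q)) else 0)"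
    by (intro sum.cong) (auto simp: rowm_def)
  also have "\<dots> \<le> norm (x (p,q))" by (simp add: sum.delta')
  finally show "(\<Sum>i<N. norm (rowm i x pq)) \<le> norm (x pq)" using pq by simp
qed (auto intro: rowm_l1 assms)

lemma sum_divmod:
  fixes g :: "nat \<Rightarrow> nat \<Rightarrow> 'a::comm_monoid_add"
  shows "(\<Sum>n<N*N. g (n div N) (n mod N)) = (\<Sum>i<N. \<Sum>j<N. g i j)"
proof -
  have b: "bij_betw (\<lambda>(i,j). i*N+j) ({..<N}\<times>{..<N}) {..<N*N}"
  proof (rule bij_betw_byWitness[where f'="\<lambda>n. (n div N, n mod N)"])
    show "\<forall>a\<in>{..<N} \<times> {..<N}. (\<lambda>n. (n div N, n mod N)) ((\<lambda>(i,j). i*N+j) a) = a" by auto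
    show "\<forall>a'\<in>{..<N * N}. (\<lambda>(i,j). i*N+j) ((\<lambda>n. (n div N, n mod N)) a') = a'" by simp
    show "(\<lambda>(i, j). i * N + j) ` ({..<N} \<times> {..<N}) \<subseteq> {..<N * N}"
    proof clarsimp
      fix i j assume "i < N" "j < N"
      then have "i * N + j < i * N + N" by simp
      also have "\<dots> \<le> N * N" using \<open>i < N\<close> by (metis add.commute mult.commute mult_Suc_right mult_le_mono2 Suc_leI)
      finally show "i * N + j < N * N" .
    qed
    show "(\<lambda>n. (n div N, n mod N)) ` {..<N * N} \<subseteq> {..<N} \<times> {..<N}"
      by (auto simp: less_mult_imp_div_less) (metis mod_less_divisor mult_0_right not_gr0 not_less0)
  qed
  have "(\<Sum>n<N*N. g (n div N) (n mod N)) = (\<Sum>(i,j)\<in>{..<N}\<times>{..<N}. g ((i*N+j) div N) ((i*N+j) mod N))"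
    using sum.reindex_bij_betw[OF b, of "\<lambda>n. g (n div N) (n mod N)"] by (simp add: case_prod_beta)
  also have "\<dots> = (\<Sum>(i,j)\<in>{..<N}\<times>{..<N}. g i j)"
    by (intro sum.cong) auto
  also have "\<dots> = (\<Sum>i<N. \<Sum>j<N. g i j)" by (simp add: sum.cartesian_product)
  finally show ?thesis .
qed



definition cN :: "nat \<Rightarrow> complex" where "cN N = 1 / of_nat N"

definition tN :: "nat \<Rightarrow> tens" where
  "tN N = (\<lambda>n. if n < N*N then ((\<lambda>p. cN N * Em (n div N) (n mod N) p), Em (n mod N) (n div N)) else zt)"

definition colA :: "nat \<Rightarrow> mat \<Rightarrow> nat \<Rightarrow> nat \<Rightarrow> mat" where
  "colA N x i j = (\<lambda>(p,q). if q = j then cN N * x (p,i) else 0)"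
definition rowB :: "mat \<Rightarrow> nat \<Rightarrow> nat \<Rightarrow> mat" where
  "rowB x j i = (\<lambda>(p,q). if p = j then x (i,q) else 0)"

lemma Em1: "Em j i = (\<lambda>p. 1 * Em j i p)" by simp

lemma mmult_row1: "mmult (Em j i) x = rowB x j i"
proof -
  have "(\<Sum>\<^sub>\<infinity>k. Em j i (p, k) * x (k, q)) = (if p = j then x (i,q) else 0)" for p q
  proof (cases "p = j")
    case True
    then have "(\<lambda>k. Em j i (p, k) * x (k, q)) = (\<lambda>k. if k = i then x (i,q) else 0)"
      by (auto simp: Em_def)
    then show ?thesis using True infsum_single_nat by simp
  next
    case False
    then show ?thesis by (simp add: Em_def)
  qed
  then show ?thesis unfolding mmult_def rowB_def by auto
qed

lemma colA_l1': "x \<in> l1mat \<Longrightarrow> colA N x i j \<in> l1mat"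
  "x \<in> l1mat \<Longrightarrow> mnorm (colA N x i j) = norm (cN N) * mnorm (colm i x)"
  unfolding colA_def using colA_l1 by auto

lemma rowB_l1': "x \<in> l1mat \<Longrightarrow> rowB x j i \<in> l1mat"
  "x \<in> l1mat \<Longrightarrow> mnorm (rowB x j i) = mnorm (rowm i x)"
proof -
  have e: "rowB x j i = (\<lambda>(p,q). if p = j then 1 * x (i,q) else 0)" unfolding rowB_def by (simp add: fun_eq_iff)
  show "x \<in> l1mat \<Longrightarrow> rowB x j i \<in> l1mat" "x \<in> l1mat \<Longrightarrow> mnorm (rowB x j i) = mnorm (rowm i x)"
    unfolding e using rowB_l1[of x j 1 i] by auto
qed

lemma cEm_l1: "(\<lambda>p. c * Em i j p) \<in> l1mat" "mnorm (\<lambda>p. c * Em i j p) = norm c"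
  using l1_scale[OF Em_l1(1)] Em_l1(2) by auto

lemma finseq_tN: "finseq (N*N) (tN N)"
  unfolding finseq_def tN_def zt_def using cEm_l1 Em_l1 by auto

lemma lmod_tN: "lmod x (tN N) n = (if n < N*N then (colA N x (n div N) (n mod N), Em (n mod N) (n div N)) else zt)"
  unfolding lmod_def tN_def zt_def colA_def by (auto simp: mmult_col)

lemma rmod_tN: "rmod (tN N) x n = (if n < N*N then ((\<lambda>p. cN N * Em (n div N) (n mod N) p), rowB x (n mod N) (n div N)) else zt)"
  unfolding rmod_def tN_def zt_def by (auto simp: mmult_row1)

lemma finseq_lmod_tN: "x \<in> l1mat \<Longrightarrow> finseq (N*N) (lmod x (tN N))"
  unfolding finseq_def lmod_tN by (auto simp: zt_def colA_l1' Em_l1)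

lemma finseq_rmod_tN: "x \<in> l1mat \<Longrightarrow> finseq (N*N) (rmod (tN N) x)"
  unfolding finseq_def rmod_tN by (auto simp: zt_def rowB_l1' cEm_l1)

definition Xd :: "mat \<Rightarrow> nat \<Rightarrow> tens" where
  "Xd x N = tdiff (lmod x (tN N)) (rmod (tN N) x)"

lemma trep_Xd: "x \<in> l1mat \<Longrightarrow> trep (Xd x N)"
  unfolding Xd_def by (intro finseq_trep[where M="2*(N*N)"] finseq_tdiff finseq_lmod_tN finseq_rmod_tN)

definition Tt :: "(mat \<Rightarrow> mat \<Rightarrow> complex) \<Rightarrow> nat \<Rightarrow> mat \<Rightarrow> nat \<Rightarrow> nat \<Rightarrow> complex" where
  "Tt \<phi> N x i j = \<phi> (colA N x i j) (Em j i) - \<phi> (\<lambda>p. cN N * Em i j p) (rowB x j i)"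

lemma tpair_Xd:
  assumes "bbil \<phi>" "x \<in> l1mat"
  shows "tpair \<phi> (Xd x N) = (\<Sum>i<N. \<Sum>j<N. Tt \<phi> N x i j)"
proof -
  have "tpair \<phi> (Xd x N) = (\<Sum>n<N*N. Tt \<phi> N x (n div N) (n mod N))"
    unfolding Xd_def tpair_tdiff[OF assms(1) finseq_lmod_tN[OF assms(2)] finseq_rmod_tN[OF assms(2)]]
    by (intro sum.cong refl) (simp add: lmod_tN rmod_tN Tt_def)
  then show ?thesis by (simp add: sum_divmod)
qed

lemma norms_Xd:
  assumes "x \<in> l1mat"
  shows "(\<Sum>n. mnorm (fst (Xd x N n)) * mnorm (snd (Xd x N n))) \<le> 2 * mnorm x"
proof -
  define c where "c = norm (cN N)"
  have c0: "c \<ge> 0" unfolding c_def by simp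
  have cN1: "real N * c \<le> 1" unfolding c_def cN_def
    by (cases "N = 0") (auto simp: norm_divide)
  have "(\<Sum>n. mnorm (fst (Xd x N n)) * mnorm (snd (Xd x N n))) =
     (\<Sum>n<N*N. c * mnorm (colm (n div N) x) + c * mnorm (rowm (n div N) x))"
    unfolding Xd_def norms_tdiff[OF finseq_lmod_tN[OF assms] finseq_rmod_tN[OF assms]]
    by (intro sum.cong refl) (simp add: lmod_tN rmod_tN colA_l1' rowB_l1' cEm_l1 Em_l1 assms c_def)
  also have "\<dots> = (\<Sum>i<N. \<Sum>j<N. c * mnorm (colm i x) + c * mnorm (rowm i x))"
    by (rule sum_divmod[where g="\<lambda>i j. c * mnorm (colm i x) + c * mnorm (rowm i x)"])
  also have "\<dots> = (real N * c) * ((\<Sum>i<N. mnorm (colm i x)) + (\<Sum>i<N. mnorm (rowm i x)))"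
    by (simp add: sum_distrib_left sum.distrib algebra_simps)
  also have "\<dots> \<le> 1 * ((\<Sum>i<N. mnorm (colm i x)) + (\<Sum>i<N. mnorm (rowm i x)))"
    by (rule mult_right_mono[OF cN1]) (auto intro!: add_nonneg_nonneg sum_nonneg mnorm_nonneg)
  also have "\<dots> \<le> 2 * mnorm x" using col_sum_le[OF assms, of N] row_sum_le[OF assms, of N] by simp
  finally show ?thesis .
qed



definition blk :: "mat \<Rightarrow> nat \<Rightarrow> mat" where
  "blk a N = (\<lambda>(p,q). if p < N \<and> q < N then a (p,q) else 0)"
definition rN :: "mat \<Rightarrow> nat \<Rightarrow> mat" where
  "rN a N = (\<lambda>(p,q). if p < N \<and> q < N then 0 else a (p,q))"

lemma blk_l1: "a \<in> l1mat \<Longrightarrow> blk a N \<in> l1mat"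
  by (rule l1_norm_le(1)[of a]) (auto simp: blk_def)
lemma rN_l1: "a \<in> l1mat \<Longrightarrow> rN a N \<in> l1mat"
  by (rule l1_norm_le(1)[of a]) (auto simp: rN_def)

lemma colA_split: "colA N a i j = (\<lambda>pq. colA N (rN a N) i j pq + colA N (blk a N) i j pq)"
  by (auto simp: fun_eq_iff colA_def rN_def blk_def)
lemma rowB_split: "rowB a j i = (\<lambda>pq. rowB (rN a N) j i pq + rowB (blk a N) j i pq)"
  by (auto simp: fun_eq_iff rowB_def rN_def blk_def)

lemma colA_blk: "colA N (blk a N) i j = (\<lambda>p. \<Sum>k<N. (cN N * blk a N (k,i)) * Em k j p)"
proof (rule ext)
  fix pq :: "nat \<times> nat"
  obtain p q where pq: "pq = (p,q)" by fastforce
  have "(\<Sum>k<N. (cN N * blk a N (k,i)) * Em k j (p,q)) = (\<Sum>k<N. if k = p then (if q = j then cN N * blk a N (p,i) else 0) else 0)"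
    by (intro sum.cong) (auto simp: Em_def)
  also have "\<dots> = colA N (blk a N) i j (p,q)"
    by (simp add: sum.delta' colA_def) (auto simp: blk_def)
  finally show "colA N (blk a N) i j pq = (\<Sum>k<N. (cN N * blk a N (k,i)) * Em k j pq)" using pq by simp
qed

lemma rowB_blk: "rowB (blk a N) j i = (\<lambda>p. \<Sum>l<N. blk a N (i,l) * Em j l p)"
proof (rule ext)
  fix pq :: "nat \<times> nat"
  obtain p q where pq: "pq = (p,q)" by fastforce
  have "(\<Sum>l<N. blk a N (i,l) * Em j l (p,q)) = (\<Sum>l<N. if l = q then (if p = j then blk a N (i,q) else 0) else 0)"
    by (intro sum.cong) (auto simp: Em_def)
  also have "\<dots> = rowB (blk a N) j i (p,q)"
    by (simp add: sum.delta' rowB_def) (auto simp: blk_def)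
  finally show "rowB (blk a N) j i pq = (\<Sum>l<N. blk a N (i,l) * Em j l pq)" using pq by simp
qed

lemma Tt_split:
  assumes "bbil \<phi>" "a \<in> l1mat"
  shows "Tt \<phi> N a i j = Tt \<phi> N (rN a N) i j + Tt \<phi> N (blk a N) i j"
proof -
  have r: "rN a N \<in> l1mat" and b: "blk a N \<in> l1mat" using assms(2) by (auto intro: rN_l1 blk_l1)
  have 1: "\<phi> (colA N a i j) (Em j i) = \<phi> (colA N (rN a N) i j) (Em j i) + \<phi> (colA N (blk a N) i j) (Em j i)"
    by (subst colA_split[of N a i j]) (intro phi_add1 assms(1) colA_l1' r b Em_l1)
  have 2: "\<phi> (\<lambda>p. cN N * Em i j p) (rowB a j i) = \<phi> (\<lambda>p. cN N * Em i j p) (rowB (rN a N) j i) + \<phi> (\<lambda>p. cN N * Em i j p) (rowB (blk a N) j i)"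
    by (subst rowB_split[of a j i N]) (intro phi_add2 assms(1) rowB_l1' r b cEm_l1)
  show ?thesis unfolding Tt_def 1 2 by simp
qed

lemma Tt_blk_zero:
  assumes "bbil \<phi>" "a \<in> l1mat"
  shows "(\<Sum>i<N. \<Sum>j<N. Tt \<phi> N (blk a N) i j) = 0"
proof -
  define b where "b = blk a N"
  define G where "G k j i = cN N * b (k,i) * \<phi> (Em k j) (Em j i)" for k j i
  have A: "\<phi> (colA N b i j) (Em j i) = (\<Sum>k<N. G k j i)" for i j
    unfolding b_def colA_blk G_def
    by (subst phi_sum1[OF assms(1)]) (auto simp: Em_l1 mult.assoc)
  have B: "\<phi> (\<lambda>p. cN N * Em i j p) (rowB b j i) = (\<Sum>l<N. G i j l)" for i j
    unfolding b_def rowB_blk G_def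
    by (subst phi_sum2[OF assms(1)]) (auto simp: Em_l1 cEm_l1 phi_scale1[OF assms(1)] mult_ac)
  have "(\<Sum>i<N. \<Sum>j<N. \<Sum>k<N. G k j i) = (\<Sum>i<N. \<Sum>k<N. \<Sum>j<N. G k j i)"
    by (rule sum.cong[OF refl], rule sum.swap)
  also have "\<dots> = (\<Sum>k<N. \<Sum>i<N. \<Sum>j<N. G k j i)" by (rule sum.swap)
  also have "\<dots> = (\<Sum>k<N. \<Sum>j<N. \<Sum>i<N. G k j i)"
    by (rule sum.cong[OF refl], rule sum.swap)
  finally have "(\<Sum>i<N. \<Sum>j<N. \<Sum>k<N. G k j i) = (\<Sum>i<N. \<Sum>j<N. \<Sum>l<N. G i j l)" .
  then show ?thesis unfolding b_def[symmetric] Tt_def A B by (simp add: sum_subtractf)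
qed

lemma teq_Xd:
  assumes "a \<in> l1mat"
  shows "teq (Xd (rN a N) N) (Xd a N)"
  unfolding teq_def
proof (intro allI impI)
  fix \<phi> assume phi: "bbil \<phi>"
  have r: "rN a N \<in> l1mat" using assms by (rule rN_l1)
  have "tpair \<phi> (Xd a N) = (\<Sum>i<N. \<Sum>j<N. Tt \<phi> N (rN a N) i j + Tt \<phi> N (blk a N) i j)"
    unfolding tpair_Xd[OF phi assms] Tt_split[OF phi assms] ..
  also have "\<dots> = (\<Sum>i<N. \<Sum>j<N. Tt \<phi> N (rN a N) i j) + (\<Sum>i<N. \<Sum>j<N. Tt \<phi> N (blk a N) i j)"
    by (simp add: sum.distrib)
  also have "\<dots> = tpair \<phi> (Xd (rN a N) N)"
    unfolding Tt_blk_zero[OF phi assms] tpair_Xd[OF phi r] by simp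
  finally show "tpair \<phi> (Xd (rN a N) N) = tpair \<phi> (Xd a N)" by simp
qed



lemma tail_lim:
  assumes "a \<in> l1mat"
  shows "(\<lambda>N. mnorm (rN a N)) \<longlonglongrightarrow> 0"
proof -
  define nA where "nA = (\<lambda>pq. norm (a pq))"
  define B where "B = (\<lambda>N::nat. {..<N} \<times> {..<N})"
  have s: "nA summable_on UNIV" using assms unfolding l1mat_def nA_def by simp
  have fin: "finite (B N)" for N unfolding B_def by simp
  have eq: "mnorm (rN a N) = mnorm a - sum nA (B N)" for N
  proof -
    have "mnorm (rN a N) = infsum nA (UNIV - B N)"
      unfolding mnorm_def by (rule infsum_cong_neutral) (auto simp: rN_def nA_def B_def split: if_splits)
    also have "\<dots> = infsum nA UNIV - infsum nA (B N)"
      by (rule infsum_Diff[OF s]) (use fin in auto)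
    also have "\<dots> = mnorm a - sum nA (B N)" using fin[of N] by (simp add: mnorm_def nA_def)
    finally show ?thesis .
  qed
  have lim1: "(sum nA \<longlongrightarrow> infsum nA UNIV) (finite_subsets_at_top UNIV)"
    by (rule infsum_tendsto[OF s])
  have lim2: "filterlim B (finite_subsets_at_top UNIV) sequentially"
    unfolding filterlim_finite_subsets_at_top
  proof (intro allI impI)
    fix X :: "(nat \<times> nat) set" assume "finite X \<and> X \<subseteq> UNIV"
    then have "finite (fst ` X)" "finite (snd ` X)" by auto
    then obtain k1 k2 where k: "fst ` X \<subseteq> {..<k1}" "snd ` X \<subseteq> {..<k2}"
      by (meson finite_nat_iff_bounded)
    show "\<forall>\<^sub>F y in sequentially. finite (B y) \<and> X \<subseteq> B y \<and> B y \<subseteq> UNIV"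
    proof (rule eventually_sequentiallyI[of "max k1 k2"])
      fix N assume "max k1 k2 \<le> N"
      then have "X \<subseteq> B N" using k unfolding B_def by force
      then show "finite (B N) \<and> X \<subseteq> B N \<and> B N \<subseteq> UNIV" using fin by auto
    qed
  qed
  have "(\<lambda>N. sum nA (B N)) \<longlonglongrightarrow> mnorm a"
    using filterlim_compose[OF lim1 lim2] unfolding mnorm_def nA_def by simp
  then have "(\<lambda>N. mnorm a - sum nA (B N)) \<longlonglongrightarrow> mnorm a - mnorm a"
    by (intro tendsto_diff tendsto_const)
  then show ?thesis unfolding eq by simp
qed

definition Pm :: "nat \<Rightarrow> mat" where "Pm N = (\<lambda>(p,q). if p = q \<and> p < N then 1 else 0)"

lemma tpi_tN: "tpi (tN N) = Pm N"
proof (rule ext)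
  fix pq :: "nat \<times> nat"
  obtain p q where pq: "pq = (p,q)" by fastforce
  have mm: "mmult (\<lambda>x. c * Em i j x) (Em j i) (p,q) = (if i = p then (if q = p then c else 0) else 0)" for c i j
    unfolding mmult_row by (auto simp: Em_def)
  have "tpi (tN N) (p,q) = (\<Sum>n<N*N. mmult (fst (tN N n)) (snd (tN N n)) (p,q))"
    unfolding tpi_def by (rule suminf_finite) (auto simp: tN_def zt_def)
  also have "\<dots> = (\<Sum>n<N*N. (\<lambda>i j. if i = p then (if q = p then cN N else 0) else 0) (n div N) (n mod N))"
    by (intro sum.cong refl) (simp add: tN_def mm)
  also have "\<dots> = (\<Sum>i<N. \<Sum>j<N. if i = p then (if q = p then cN N else 0) else 0)"
    by (rule sum_divmod)
  also have "\<dots> = (\<Sum>i<N. if i = p then of_nat N * (if q = p then cN N else 0) else 0)"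
    by (intro sum.cong refl) auto
  also have "\<dots> = Pm N (p,q)"
    by (simp add: sum.delta' Pm_def cN_def)
  finally show "tpi (tN N) pq = Pm N pq" using pq by simp
qed

lemma mmult_Pm: "mmult (Pm N) a = (\<lambda>(p,q). if p < N then a (p,q) else 0)"
proof -
  have "(\<Sum>\<^sub>\<infinity>k. Pm N (p, k) * a (k, q)) = (if p < N then a (p,q) else 0)" for p q
  proof -
    have "(\<lambda>k. Pm N (p, k) * a (k, q)) = (\<lambda>k. if k = p then (if p < N then a (p,q) else 0) else 0)"
      by (auto simp: Pm_def)
    then show ?thesis using infsum_single_nat by simp
  qed
  then show ?thesis unfolding mmult_def by auto
qed

lemma tflip_tN: "teq (tflip (tN N)) (tN N)"
  unfolding teq_def
proof (intro allI impI)
  fix \<phi> assume phi: "bbil \<phi>"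
  have "tpair \<phi> (tflip (tN N)) = (\<Sum>n<N*N. (\<lambda>i j. cN N * \<phi> (Em j i) (Em i j)) (n div N) (n mod N))"
    unfolding finseq_tpair[OF phi finseq_tflip[OF finseq_tN]]
    by (intro sum.cong refl) (simp add: tflip_def tN_def phi_scale2[OF phi] Em_l1)
  also have "\<dots> = (\<Sum>i<N. \<Sum>j<N. cN N * \<phi> (Em j i) (Em i j))" by (rule sum_divmod)
  also have "\<dots> = (\<Sum>j<N. \<Sum>i<N. cN N * \<phi> (Em j i) (Em i j))" by (rule sum.swap)
  also have "\<dots> = (\<Sum>n<N*N. (\<lambda>i j. cN N * \<phi> (Em i j) (Em j i)) (n div N) (n mod N))"
    by (rule sum_divmod[symmetric])
  also have "\<dots> = tpair \<phi> (tN N)"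
    unfolding finseq_tpair[OF phi finseq_tN]
    by (intro sum.cong refl) (simp add: tN_def phi_scale1[OF phi] Em_l1)
  finally show "tpair \<phi> (tflip (tN N)) = tpair \<phi> (tN N)" .
qed



theorem theorem4p1:
  shows "\<exists>F :: tens filter. F \<noteq> bot \<and>
           (\<forall>\<^sub>F t in F. trep t \<and> teq (tflip t) t) \<and>
           (\<forall>a\<in>l1mat.
              ((\<lambda>t. pnorm (tdiff (lmod a t) (rmod t a))) \<longlongrightarrow> 0) F \<and>
              ((\<lambda>t. mnorm (\<lambda>p. mmult (tpi t) a p - a p)) \<longlongrightarrow> 0) F)"
proof (intro exI conjI ballI)
  let ?F = "filtermap tN sequentially"
  show "?F \<noteq> bot" by (simp add: filtermap_bot_iff)
  show "\<forall>\<^sub>F t in ?F. trep t \<and> teq (tflip t) t"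
    unfolding eventually_filtermap
    by (intro always_eventually allI conjI finseq_trep[OF finseq_tN] tflip_tN)
  fix a assume a: "a \<in> l1mat"
  have lim: "(\<lambda>N. mnorm (rN a N)) \<longlonglongrightarrow> 0" by (rule tail_lim[OF a])
  show "((\<lambda>t. pnorm (tdiff (lmod a t) (rmod t a))) \<longlongrightarrow> 0) ?F"
    unfolding filterlim_filtermap
  proof (rule tendsto_sandwich[where f="\<lambda>_. 0" and h="\<lambda>N. 2 * mnorm (rN a N)"])
    show "\<forall>\<^sub>F N in sequentially. 0 \<le> pnorm (tdiff (lmod a (tN N)) (rmod (tN N) a))"
      using pnorm_nonneg[OF trep_Xd[OF a]] unfolding Xd_def by simp
    show "\<forall>\<^sub>F N in sequentially. pnorm (tdiff (lmod a (tN N)) (rmod (tN N) a)) \<le> 2 * mnorm (rN a N)"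
    proof (intro always_eventually allI)
      fix N
      have "pnorm (Xd a N) \<le> (\<Sum>n. mnorm (fst (Xd (rN a N) N n)) * mnorm (snd (Xd (rN a N) N n)))"
        by (rule pnorm_le[OF trep_Xd[OF rN_l1[OF a]] teq_Xd[OF a]])
      also have "\<dots> \<le> 2 * mnorm (rN a N)" by (rule norms_Xd[OF rN_l1[OF a]])
      finally show "pnorm (tdiff (lmod a (tN N)) (rmod (tN N) a)) \<le> 2 * mnorm (rN a N)"
        unfolding Xd_def .
    qed
    show "((\<lambda>_. 0::real) \<longlongrightarrow> 0) sequentially" by simp
    show "(\<lambda>N. 2 * mnorm (rN a N)) \<longlonglongrightarrow> 0" using tendsto_mult_right_zero[OF lim, of 2] by simp
  qed
  show "((\<lambda>t. mnorm (\<lambda>p. mmult (tpi t) a p - a p)) \<longlongrightarrow> 0) ?F"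
    unfolding filterlim_filtermap
  proof (rule tendsto_sandwich[where f="\<lambda>_. 0" and h="\<lambda>N. mnorm (rN a N)"])
    show "\<forall>\<^sub>F N in sequentially. 0 \<le> mnorm (\<lambda>p. mmult (tpi (tN N)) a p - a p)"
      by (simp add: mnorm_nonneg)
    show "\<forall>\<^sub>F N in sequentially. mnorm (\<lambda>p. mmult (tpi (tN N)) a p - a p) \<le> mnorm (rN a N)"
    proof (intro always_eventually allI)
      fix N
      show "mnorm (\<lambda>p. mmult (tpi (tN N)) a p - a p) \<le> mnorm (rN a N)"
        by (rule l1_norm_le(2)[OF rN_l1[OF a]]) (auto simp: tpi_tN mmult_Pm rN_def)
    qed
    show "((\<lambda>_. 0::real) \<longlongrightarrow> 0) sequentially" by simp
    show "(\<lambda>N. mnorm (rN a N)) \<longlonglongrightarrow> 0" by (rule lim)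
  qed
qed


end
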